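(* Let $\mathbf A$ be an integral interior $r\ell uz$-groupoid and $\mathbf B$ a finite partial subalgebra of $\mathbf A$. Then $\mathbf F^+_{\mathbf A,\mathbf B^0}$ is finite. Moreover, if $\mathbf A$ is zero-bounded (i.e. $0\le x$ for all $x\in A$), then so is $\mathbf F^+_{\mathbf A,\mathbf B^0}$ (its constant $0$ is its least element).
   Context: An $r\ell uz$-groupoid is an algebra $(A,\wedge,\vee,\cdot,\backslash,/,1,0)$ with $(A,\wedge,\vee)$ a lattice (order $\le$), $(A,\cdot,1)$ a unital groupoid (binary operation, not necessarily associative, with two-sided unit $1$), $0\in A$ arbitrary, and $x\cdot y\le z\iff y\le x\backslash z\iff x\le z/y$. An interior one has in addition a unary $!$ with $1\le !1$, $!x\cdot!y\le !(x\cdot y)$, $!x\le x$, $!x\le !!x$, $x\le y\Rightarrow !x\le !y$; integral means $x\le 1$ for all $x$. A partial subalgebra $\mathbf B$ of $\mathbf A$ is a subset $B\subseteq A$ with $f^{\mathbf B}(\vec b)=f^{\mathbf A}(\vec b)$ if this lies in $B$, undefined otherwise. $\mathbf B^0$ denotes the partial subalgebra of $\mathbf A$ with universe $B\cup\{0^{\mathbf A}\}$. An enriched $ruz$-frame is $\mathbf F=(G,T,N,K,\epsilon)$ where $(G,\cdot,\varepsilon)$ is a unital groupoid, $T$ a set, $N\subseteq G\times T$ a nuclear relation (for all $x,y\in G$, $z\in T$ there exist $x\backslash\!\!\backslash z,\ z/\!\!/y\in T$ with $x\cdot y\,N\,z\iff y\,N\,x\backslash\!\!\backslash z\iff x\,N\,z/\!\!/y$),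 $K$ a sub-unital-groupoid of $G$, and $\epsilon\in T$. For $X\subseteq G$, $Y\subseteq T$: $X^{\rhd}=\{t\in T\mid \forall x\in X\,(xNt)\}$, $Y^{\lhd}=\{g\in G\mid\forall y\in Y\,(gNy)\}$, $\gamma_N(X)=X^{\rhd\lhd}$; $X$ closed if $\gamma_N(X)=X$. $\mathbf F^+$ has universe the closed sets, with $X\wedge Y=X\cap Y$, $X\vee Y=\gamma_N(X\cup Y)$, $X\cdot Y=\gamma_N(X\circ Y)$ where $X\circ Y=\{x\cdot y\}$, $X\backslash Y=\{z\mid X\circ\{z\}\subseteq Y\}$, $Y/X=\{z\mid\{z\}\circ X\subseteq Y\}$, $!X=\gamma_N(X\cap K)$, unit $\gamma_N(\{\varepsilon\})$, zero $\{\epsilon\}^{\lhd}$. For a partial subalgebra $\mathbf C$ of $\mathbf A$ (here $\mathbf C=\mathbf B^0$): $G_C$ is the sub-unital-groupoid of $(A,\cdot,1)$ generated by $C$; $U_{G_C}$ the set of unary linear polynomials over $G_C$ (maps $G_C\to G_C$ given by a groupoid term in which one variable occurs exactly once and other leaves are in $G_C$, including $\mathrm{id}$); $T_C=U_{G_C}\times C$; $x\,N_C\,(u,c)$ iff $u(x)\le^{\mathbf A}c$; $K_C$ the sub-unital-groupoid generated by $\{!^{\mathbf A}c\mid c\in C,\ !^{\mathbf A}c\in C\}$. Then $\mathbf F_{\mathbf A,\mathbf B^0}=(G_{B^0},T_{B^0},N_{B^0},K_{B^0},\epsilon)$ with $\epsilon=(\mathrm{id},0^{\mathbf A})$. *)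

theory Defs
  imports Main
begin

record 'a rluz =
  rmeet :: "'a \<Rightarrow> 'a \<Rightarrow> 'a"
  rjoin :: "'a \<Rightarrow> 'a \<Rightarrow> 'a"
  rmult :: "'a \<Rightarrow> 'a \<Rightarrow> 'a"
  rldiv :: "'a \<Rightarrow> 'a \<Rightarrow> 'a"
  rrdiv :: "'a \<Rightarrow> 'a \<Rightarrow> 'a"
  rone  :: 'a
  rzero :: 'a
  rbang :: "'a \<Rightarrow> 'a"

definition rle :: "'a rluz \<Rightarrow> 'a \<Rightarrow> 'a \<Rightarrow> bool" where
  "rle A x y \<longleftrightarrow> rmeet A x y = x"

definition is_lattice_ops :: "('a \<Rightarrow> 'a \<Rightarrow> 'a) \<Rightarrow> ('a \<Rightarrow> 'a \<Rightarrow> 'a) \<Rightarrow> bool" where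
  "is_lattice_ops m j \<longleftrightarrow>
     (\<forall>x y z. m x (m y z) = m (m x y) z) \<and> (\<forall>x y. m x y = m y x) \<and>
     (\<forall>x y z. j x (j y z) = j (j x y) z) \<and> (\<forall>x y. j x y = j y x) \<and>
     (\<forall>x y. m x (j x y) = x) \<and> (\<forall>x y. j x (m x y) = x)"

definition rluz_groupoid :: "'a rluz \<Rightarrow> bool" where
  "rluz_groupoid A \<longleftrightarrow>
     is_lattice_ops (rmeet A) (rjoin A) \<and>
     (\<forall>x. rmult A (rone A) x = x \<and> rmult A x (rone A) = x) \<and>
     (\<forall>x y z. (rle A (rmult A x y) z \<longleftrightarrow> rle A y (rldiv A x z)) \<and>
              (rle A (rmult A x y) z \<longleftrightarrow> rle A x (rrdiv A z y)))"

definition interior_rluz :: "'a rluz \<Rightarrow> bool" where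
  "interior_rluz A \<longleftrightarrow> rluz_groupoid A \<and>
     rle A (rone A) (rbang A (rone A)) \<and>
     (\<forall>x y. rle A (rmult A (rbang A x) (rbang A y)) (rbang A (rmult A x y))) \<and>
     (\<forall>x. rle A (rbang A x) x) \<and>
     (\<forall>x. rle A (rbang A x) (rbang A (rbang A x))) \<and>
     (\<forall>x y. rle A x y \<longrightarrow> rle A (rbang A x) (rbang A y))"

definition integral :: "'a rluz \<Rightarrow> bool" where
  "integral A \<longleftrightarrow> (\<forall>x. rle A x (rone A))"

definition zero_bounded :: "'a rluz \<Rightarrow> bool" where
  "zero_bounded A \<longleftrightarrow> (\<forall>x. rle A (rzero A) x)"

record ('g, 't) frame =
  fG    :: "'g set"
  fmult :: "'g \<Rightarrow> 'g \<Rightarrow> 'g"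
  funit :: 'g
  fT    :: "'t set"
  fN    :: "'g \<Rightarrow> 't \<Rightarrow> bool"
  fK    :: "'g set"
  feps  :: 't

definition rhd :: "('g, 't) frame \<Rightarrow> 'g set \<Rightarrow> 't set" where
  "rhd F X = {t \<in> fT F. \<forall>x\<in>X. fN F x t}"

definition lhd :: "('g, 't) frame \<Rightarrow> 't set \<Rightarrow> 'g set" where
  "lhd F Y = {g \<in> fG F. \<forall>y\<in>Y. fN F g y}"

definition gammaN :: "('g, 't) frame \<Rightarrow> 'g set \<Rightarrow> 'g set" where
  "gammaN F X = lhd F (rhd F X)"

definition fcirc :: "('g, 't) frame \<Rightarrow> 'g set \<Rightarrow> 'g set \<Rightarrow> 'g set" where
  "fcirc F X Y = {fmult F x y | x y. x \<in> X \<and> y \<in> Y}"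

record 'g cplx =
  cU     :: "'g set set"
  cmeet  :: "'g set \<Rightarrow> 'g set \<Rightarrow> 'g set"
  cjoin  :: "'g set \<Rightarrow> 'g set \<Rightarrow> 'g set"
  cmult  :: "'g set \<Rightarrow> 'g set \<Rightarrow> 'g set"
  cldiv  :: "'g set \<Rightarrow> 'g set \<Rightarrow> 'g set"
  crdiv  :: "'g set \<Rightarrow> 'g set \<Rightarrow> 'g set"
  cone   :: "'g set"
  czero  :: "'g set"
  cbang  :: "'g set \<Rightarrow> 'g set"

definition Fplus :: "('g, 't) frame \<Rightarrow> 'g cplx" where
  "Fplus F = \<lparr>
     cU = {X. X \<subseteq> fG F \<and> gammaN F X = X},
     cmeet = (\<lambda>X Y. X \<inter> Y),
     cjoin = (\<lambda>X Y. gammaN F (X \<union> Y)),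
     cmult = (\<lambda>X Y. gammaN F (fcirc F X Y)),
     cldiv = (\<lambda>X Y. {z \<in> fG F. fcirc F X {z} \<subseteq> Y}),
     crdiv = (\<lambda>Y X. {z \<in> fG F. fcirc F {z} X \<subseteq> Y}),
     cone = gammaN F {funit F},
     czero = lhd F {feps F},
     cbang = (\<lambda>X. gammaN F (X \<inter> fK F)) \<rparr>"

inductive_set gen_subgroupoid :: "'a rluz \<Rightarrow> 'a set \<Rightarrow> 'a set" for A S where
  base: "c \<in> S \<Longrightarrow> c \<in> gen_subgroupoid A S"
| unit: "rone A \<in> gen_subgroupoid A S"
| mult: "x \<in> gen_subgroupoid A S \<Longrightarrow> y \<in> gen_subgroupoid A S \<Longrightarrow>
           rmult A x y \<in> gen_subgroupoid A S"

abbreviation GC :: "'a rluz \<Rightarrow> 'a set \<Rightarrow> 'a set" where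
  "GC A C \<equiv> gen_subgroupoid A C"

text \<open>Unary linear polynomials over G_C (as maps; only their values on G_C matter).\<close>
inductive_set ulin :: "'a rluz \<Rightarrow> 'a set \<Rightarrow> ('a \<Rightarrow> 'a) set" for A G where
  ident: "id \<in> ulin A G"
| lmul: "u \<in> ulin A G \<Longrightarrow> g \<in> G \<Longrightarrow> (\<lambda>x. rmult A g (u x)) \<in> ulin A G"
| rmul: "u \<in> ulin A G \<Longrightarrow> g \<in> G \<Longrightarrow> (\<lambda>x. rmult A (u x) g) \<in> ulin A G"

definition KC :: "'a rluz \<Rightarrow> 'a set \<Rightarrow> 'a set" where
  "KC A C = gen_subgroupoid A {rbang A c | c. c \<in> C \<and> rbang A c \<in> C}"

definition frameAC :: "'a rluz \<Rightarrow> 'a set \<Rightarrow> ('a, ('a \<Rightarrow> 'a) \<times> 'a) frame" where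
  "frameAC A C = \<lparr>
     fG = GC A C,
     fmult = rmult A,
     funit = rone A,
     fT = ulin A (GC A C) \<times> C,
     fN = (\<lambda>x (u, c). rle A (u x) c),
     fK = KC A C,
     feps = (id, rzero A) \<rparr>"

definition frameAB0 :: "'a rluz \<Rightarrow> 'a set \<Rightarrow> ('a, ('a \<Rightarrow> 'a) \<times> 'a) frame" where
  "frameAB0 A B = frameAC A (B \<union> {rzero A})"

end

theory Submission
  imports Defs "HOL-Library.Ramsey" "HOL-Library.Infinite_Set"
begin


datatype 'l tr = Lf 'l | Nd "'l tr" "'l tr"

inductive emb :: "'l tr \<Rightarrow> 'l tr \<Rightarrow> bool" where
  emb_lf: "emb (Lf a) (Lf a)"
| emb_l: "emb s t1 \<Longrightarrow> emb s (Nd t1 t2)"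
| emb_r: "emb s t2 \<Longrightarrow> emb s (Nd t1 t2)"
| emb_nd: "emb s1 t1 \<Longrightarrow> emb s2 t2 \<Longrightarrow> emb (Nd s1 s2) (Nd t1 t2)"

lemma emb_refl: "emb t t"
  by (induction t) (auto intro: emb.intros)

definition good :: "'l tr set \<Rightarrow> bool" where
  "good S \<longleftrightarrow> (\<forall>f::nat \<Rightarrow> 'l tr. (\<forall>i. f i \<in> S) \<longrightarrow> (\<exists>i j. i < j \<and> emb (f i) (f j)))"

lemma good_chain:
  fixes f :: "nat \<Rightarrow> 'l tr"
  assumes "good S" "\<And>i. f i \<in> S"
  shows "\<exists>h::nat\<Rightarrow>nat. strict_mono h \<and> (\<forall>a b::nat. a < b \<longrightarrow> emb (f (h a)) (f (h b)))"
proof -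
  define col where "col X = (if emb (f (Min X)) (f (Max X)) then 0 else (1::nat))" for X :: "nat set"
  have part: "\<forall>x\<in>UNIV. \<forall>y\<in>UNIV. x \<noteq> y \<longrightarrow> col {x, y} < 2" by (simp add: col_def)
  from Ramsey2[OF infinite_UNIV_nat part] obtain Y t where Y: "infinite Y" "t < 2" "\<forall>x\<in>Y. \<forall>y\<in>Y. x\<noteq>y \<longrightarrow> col {x, y} = t"
    by blast
  define h where "h = enumerate Y"
  have sm: "strict_mono h" using Y(1) by (simp add: h_def strict_mono_def enumerate_mono)
  have hY: "h n \<in> Y" for n using Y(1) by (simp add: h_def enumerate_in_set)
  have colh: "col {h a, h b} = t" if "a < b" for a b
  proof -
    have "h a < h b" using sm that by (simp add: strict_mono_less)
    then show ?thesis using Y(3)[rule_format, OF hY[of a] hY[of b]] by simp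
  qed
  have minmax: "a < b \<Longrightarrow> Min {h a, h b} = h a \<and> Max {h a, h b} = h b" for a b
    using sm by (simp add: strict_mono_less min_def max_def less_imp_le)
  show ?thesis
  proof (cases "t = 0")
    case True
    have "emb (f (h a)) (f (h b))" if "a < b" for a b :: nat
      using colh[OF that] minmax[OF that] True by (auto simp: col_def split: if_splits)
    then have "\<forall>a b::nat. a < b \<longrightarrow> emb (f (h a)) (f (h b))" by blast
    with sm have "strict_mono h \<and> (\<forall>a b::nat. a < b \<longrightarrow> emb (f (h a)) (f (h b)))" by (rule conjI)
    then show ?thesis by - (rule exI, assumption)
  next
    case False
    obtain i j where "i < j" "emb (f (h i)) (f (h j))"
    proof -
      have "\<forall>i. (f \<circ> h) i \<in> S" using assms(2) by simp
      then have "\<exists>i j. i < j \<and> emb ((f \<circ> h) i) ((f \<circ> h) j)"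
        using assms(1) unfolding good_def by blast
      then show ?thesis using that by auto
    qed
    then have "col {h i, h j} = 0" using minmax[of i j] by (simp add: col_def)
    then show ?thesis using False colh[of i j] \<open>i < j\<close> by simp
  qed
qed

definition bad :: "'l set \<Rightarrow> (nat \<Rightarrow> 'l tr) \<Rightarrow> bool" where
  "bad L f \<longleftrightarrow> (\<forall>i. set_tr (f i) \<subseteq> L) \<and> (\<forall>i j. i < j \<longrightarrow> \<not> emb (f i) (f j))"

definition Ext :: "'l set \<Rightarrow> 'l tr list \<Rightarrow> bool" where
  "Ext L ps \<longleftrightarrow> (\<exists>f. bad L f \<and> (\<forall>i<length ps. f i = ps ! i))"

definition nxt :: "'l set \<Rightarrow> 'l tr list \<Rightarrow> 'l tr" where
  "nxt L ps = (SOME t. Ext L (ps @ [t]) \<and> (\<forall>t'. Ext L (ps @ [t']) \<longrightarrow> size t \<le> size t'))"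

primrec pre :: "'l set \<Rightarrow> nat \<Rightarrow> 'l tr list" where
  "pre L 0 = []"
| "pre L (Suc n) = pre L n @ [nxt L (pre L n)]"

lemma length_pre[simp]: "length (pre L n) = n"
  by (induction n) auto

lemma nxt_prop:
  assumes "Ext L ps"
  shows "Ext L (ps @ [nxt L ps]) \<and> (\<forall>t'. Ext L (ps @ [t']) \<longrightarrow> size (nxt L ps) \<le> size t')"
proof -
  obtain f where f: "bad L f" "\<forall>i<length ps. f i = ps ! i" using assms by (auto simp: Ext_def)
  have "Ext L (ps @ [f (length ps)])"
    unfolding Ext_def using f by (intro exI[of _ f]) (auto simp: nth_append less_Suc_eq)
  then have "\<exists>t. Ext L (ps @ [t]) \<and> (\<forall>t'. Ext L (ps @ [t']) \<longrightarrow> size t \<le> size t')"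
    using ex_has_least_nat[of "\<lambda>t. Ext L (ps @ [t])" _ size] by blast
  then show ?thesis unfolding nxt_def by (rule someI_ex)
qed

lemma Ext_pre: "Ext L [] \<Longrightarrow> Ext L (pre L n)"
  by (induction n) (auto dest: nxt_prop)

definition mb :: "'l set \<Rightarrow> nat \<Rightarrow> 'l tr" where
  "mb L i = pre L (Suc i) ! i"

lemma pre_nth: "i < n \<Longrightarrow> pre L n ! i = mb L i"
proof (induction n)
  case 0 then show ?case by simp
next
  case (Suc n)
  then show ?case by (cases "i = n") (auto simp: mb_def nth_append less_Suc_eq)
qed

lemma mb_bad:
  assumes "Ext L []" shows "bad L (mb L)"
proof -
  have "set_tr (mb L i) \<subseteq> L" for i
  proof -
    obtain f where f: "bad L f" "\<forall>k<Suc i. f k = pre L (Suc i) ! k"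
      using Ext_pre[OF assms, of "Suc i"] by (auto simp: Ext_def)
    then have "f i = mb L i" using pre_nth[of i "Suc i" L] by (simp del: pre.simps)
    moreover have "set_tr (f i) \<subseteq> L" using f(1) by (simp add: bad_def)
    ultimately show ?thesis by simp
  qed
  moreover have "\<not> emb (mb L i) (mb L j)" if "i < j" for i j
  proof -
    obtain f where f: "bad L f" "\<forall>k<Suc j. f k = pre L (Suc j) ! k"
      using Ext_pre[OF assms, of "Suc j"] by (auto simp: Ext_def)
    then have "f i = mb L i" "f j = mb L j" using pre_nth[of i "Suc j" L] pre_nth[of j "Suc j" L] that
      by (simp_all del: pre.simps)
    moreover have "\<not> emb (f i) (f j)" using f(1) that by (simp add: bad_def)
    ultimately show ?thesis by simp
  qed
  ultimately show ?thesis by (auto simp: bad_def)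
qed

lemma mb_min:
  assumes "Ext L []" "bad L f" "\<forall>i<n. f i = mb L i"
  shows "size (mb L n) \<le> size (f n)"
proof -
  have "Ext L (pre L n @ [f n])"
    unfolding Ext_def using assms pre_nth[of _ n L]
    by (intro exI[of _ f]) (auto simp: nth_append less_Suc_eq)
  then have "size (nxt L (pre L n)) \<le> size (f n)" using nxt_prop[OF Ext_pre[OF assms(1)]] by blast
  then show ?thesis by (simp add: mb_def nth_append)
qed

lemma emb_child:
  assumes "m = Nd u v" "t = u \<or> t = v" "emb s t"
  shows "emb s m"
  using assms by (auto intro: emb.intros)

theorem kruskal:
  assumes "finite L"
  shows "good {t. set_tr t \<subseteq> L}"
proof (rule ccontr)
  assume "\<not> ?thesis"
  then obtain f0 :: "nat \<Rightarrow> 'a tr" where "\<forall>i. set_tr (f0 i) \<subseteq> L" "\<forall>i j. i < j \<longrightarrow> \<not> emb (f0 i) (f0 j)"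
    unfolding good_def by blast
  then have E: "Ext L []" unfolding Ext_def bad_def by auto
  define m where "m = mb L"
  have mbad: "bad L m" using mb_bad[OF E] by (simp add: m_def)
  then have mL: "set_tr (m i) \<subseteq> L" and mne: "i < j \<Longrightarrow> \<not> emb (m i) (m j)" for i j
    by (auto simp: bad_def)
  define Lv where "Lv = {i. \<exists>a. m i = Lf a}"
  have "finite Lv"
  proof (rule ccontr)
    assume inf: "infinite Lv"
    have "m ` Lv \<subseteq> Lf ` L"
    proof
      fix x assume "x \<in> m ` Lv"
      then obtain i a where "x = m i" "m i = Lf a" by (auto simp: Lv_def)
      moreover have "a \<in> L" using mL[of i] \<open>m i = Lf a\<close> by simp
      ultimately show "x \<in> Lf ` L" by simp
    qed
    then have "finite (m ` Lv)" using assms finite_surj by blast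
    then obtain i0 where i0: "i0 \<in> Lv" "infinite {i \<in> Lv. m i = m i0}"
      using pigeonhole_infinite[OF inf] by blast
    then obtain j where "j \<in> {i \<in> Lv. m i = m i0}" "j > i0"
      using infinite_nat_iff_unbounded by blast
    then show False using mne[of i0 j] emb_refl[of "m i0"] by auto
  qed
  then obtain N where N: "\<forall>i\<in>Lv. i < N" using finite_nat_set_iff_bounded by blast
  define S where "S = {t. \<exists>i u. m i = Nd t u \<or> m i = Nd u t}"
  have goodS: "good S"
    unfolding good_def
  proof (intro allI impI)
    fix g :: "nat \<Rightarrow> 'a tr"
    assume gS: "\<forall>k. g k \<in> S"
    show "\<exists>i j. i < j \<and> emb (g i) (g j)"
    proof (rule ccontr)
      assume gb: "\<not> ?thesis"
      have "\<forall>k. \<exists>i u. m i = Nd (g k) u \<or> m i = Nd u (g k)" using gS by (auto simp: S_def)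
      then have "\<exists>\<phi>. \<forall>k. \<exists>u. m (\<phi> k) = Nd (g k) u \<or> m (\<phi> k) = Nd u (g k)"
        by (rule choice)
      then obtain \<phi> where \<phi>: "\<forall>k. \<exists>u. m (\<phi> k) = Nd (g k) u \<or> m (\<phi> k) = Nd u (g k)"
        by blast
      obtain k0 where k0: "\<forall>k. \<phi> k0 \<le> \<phi> k"
        using ex_has_least_nat[of "\<lambda>_. True" 0 \<phi>] by blast
      define n where "n = \<phi> k0"
      define f where "f i = (if i < n then m i else g (k0 + (i - n)))" for i
      have gL: "set_tr (g k) \<subseteq> L" for k
        using \<phi>[rule_format, of k] mL[of "\<phi> k"] by auto
      have gemb: "emb s (g k) \<Longrightarrow> emb s (m (\<phi> k))" for s k
        using \<phi>[rule_format, of k] by (auto intro: emb.intros)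
      have gsize: "size (g k) < size (m (\<phi> k))" for k
        using \<phi>[rule_format, of k] by auto
      have "bad L f"
        unfolding bad_def
      proof (intro conjI allI impI)
        fix i show "set_tr (f i) \<subseteq> L" using mL gL by (simp add: f_def)
      next
        fix i j :: nat assume ij: "i < j"
        show "\<not> emb (f i) (f j)"
        proof (cases "j < n")
          case True then show ?thesis using ij mne by (simp add: f_def)
        next
          case jn: False
          show ?thesis
          proof (cases "i < n")
            case True
            have "i < \<phi> (k0 + (j - n))" using True k0 n_def by (metis order.strict_trans2)
            then show ?thesis using True jn gemb mne by (auto simp: f_def)
          next
            case False
            then show ?thesis using jn ij gb by (auto simp: f_def)
          qed
        qed
      qed
      moreover have "\<forall>i<n. f i = m i" by (simp add: f_def)
      ultimately have "size (m n) \<le> size (f n)" using mb_min[OF E] m_def by blast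
      then show False using gsize[of k0] n_def by (simp add: f_def)
    qed
  qed
  have nd: "\<exists>a b. m (N + i) = Nd a b" for i
  proof -
    have "N + i \<notin> Lv" using N by auto
    then show ?thesis by (cases "m (N + i)") (auto simp: Lv_def)
  qed
  define l where "l i = (case m (N + i) of Nd a b \<Rightarrow> a | Lf _ \<Rightarrow> undefined)" for i
  define r where "r i = (case m (N + i) of Nd a b \<Rightarrow> b | Lf _ \<Rightarrow> undefined)" for i
  have mlr: "m (N + i) = Nd (l i) (r i)" for i
    using nd[of i] by (auto simp: l_def r_def)
  have lS: "l i \<in> S" and rS: "r i \<in> S" for i
    using mlr[of i] unfolding S_def by blast+
  from good_chain[OF goodS lS] obtain h :: "nat \<Rightarrow> nat"
    where h0: "strict_mono h \<and> (\<forall>a b::nat. a < b \<longrightarrow> emb (l (h a)) (l (h b)))" ..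
  then have h: "strict_mono h" "\<forall>a b::nat. a < b \<longrightarrow> emb (l (h a)) (l (h b))" by simp_all
  have "\<forall>i. (r \<circ> h) i \<in> S" using rS by simp
  then have "\<exists>a b::nat. a < b \<and> emb ((r \<circ> h) a) ((r \<circ> h) b)" using goodS unfolding good_def by blast
  then obtain a b where ab: "a < b" "emb (r (h a)) (r (h b))" by auto
  have "emb (m (N + h a)) (m (N + h b))" using mlr h ab by (auto intro: emb_nd)
  moreover have "N + h a < N + h b" using h(1) ab(1) by (simp add: strict_mono_less)
  ultimately show False using mne by blast
qed



lemma lat_facts:
  assumes "rluz_groupoid A"
  shows rle_refl: "rle A x x"
    and rle_trans: "rle A x y \<Longrightarrow> rle A y z \<Longrightarrow> rle A x z"
    and rle_antisym: "rle A x y \<Longrightarrow> rle A y x \<Longrightarrow> x = y"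
proof -
  have L: "is_lattice_ops (rmeet A) (rjoin A)" using assms by (simp add: rluz_groupoid_def)
  then have abs1: "rmeet A x (rjoin A x y) = x" and abs2: "rjoin A x (rmeet A x y) = x"
    and assoc: "rmeet A x (rmeet A y z) = rmeet A (rmeet A x y) z"
    and comm: "rmeet A x y = rmeet A y x" for x y z
    unfolding is_lattice_ops_def by blast+
  have "rmeet A x x = rmeet A x (rjoin A x (rmeet A x x))" using abs2[of x x] by simp
  also have "\<dots> = x" by (rule abs1)
  finally have "rmeet A x x = x" .
  then show "rle A x x" by (simp add: rle_def)
  show "rle A x y \<Longrightarrow> rle A y z \<Longrightarrow> rle A x z"
    unfolding rle_def by (metis assoc)
  show "rle A x y \<Longrightarrow> rle A y x \<Longrightarrow> x = y"
    unfolding rle_def by (metis comm)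
qed

lemma resid:
  assumes "rluz_groupoid A"
  shows "rle A (rmult A x y) z \<longleftrightarrow> rle A y (rldiv A x z)"
    and "rle A (rmult A x y) z \<longleftrightarrow> rle A x (rrdiv A z y)"
  using assms by (auto simp: rluz_groupoid_def)

lemma mult_mono_r:
  assumes "rluz_groupoid A" "rle A y y'"
  shows "rle A (rmult A x y) (rmult A x y')"
proof -
  have "rle A y' (rldiv A x (rmult A x y'))"
    using resid(1)[OF assms(1)] rle_refl[OF assms(1)] by blast
  then have "rle A y (rldiv A x (rmult A x y'))" using rle_trans[OF assms(1) assms(2)] by blast
  then show ?thesis using resid(1)[OF assms(1)] by blast
qed

lemma mult_mono_l:
  assumes "rluz_groupoid A" "rle A x x'"
  shows "rle A (rmult A x y) (rmult A x' y)"
proof -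
  have "rle A x' (rrdiv A (rmult A x' y) y)"
    using resid(2)[OF assms(1)] rle_refl[OF assms(1)] by blast
  then have "rle A x (rrdiv A (rmult A x' y) y)" using rle_trans[OF assms(1) assms(2)] by blast
  then show ?thesis using resid(2)[OF assms(1)] by blast
qed

lemma mult_le:
  assumes "rluz_groupoid A" "integral A"
  shows "rle A (rmult A x y) x" and "rle A (rmult A x y) y"
proof -
  have u: "rmult A (rone A) x = x \<and> rmult A x (rone A) = x" for x
    using assms(1) by (simp add: rluz_groupoid_def)
  show "rle A (rmult A x y) x"
    using mult_mono_r[OF assms(1), of y "rone A" x] assms(2) u by (simp add: integral_def)
  show "rle A (rmult A x y) y"
    using mult_mono_l[OF assms(1), of x "rone A" y] assms(2) u by (simp add: integral_def)
qed

fun ev :: "'a rluz \<Rightarrow> 'a \<Rightarrow> 'a option tr \<Rightarrow> 'a" where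
  "ev A y (Lf None) = y"
| "ev A y (Lf (Some a)) = a"
| "ev A y (Nd s t) = rmult A (ev A y s) (ev A y t)"

lemma emb_ev:
  assumes "rluz_groupoid A" "integral A" "emb s t"
  shows "rle A (ev A y t) (ev A y s)"
  using assms(3)
proof (induction rule: emb.induct)
  case (emb_lf a) then show ?case using rle_refl[OF assms(1)] by simp
next
  case (emb_l s t1 t2) then show ?case
    using rle_trans[OF assms(1) mult_le(1)[OF assms(1,2)]] by simp
next
  case (emb_r s t2 t1) then show ?case
    using rle_trans[OF assms(1) mult_le(2)[OF assms(1,2)]] by simp
next
  case (emb_nd s1 t1 s2 t2) then show ?case
    using rle_trans[OF assms(1) mult_mono_l[OF assms(1)] mult_mono_r[OF assms(1)]] by simp
qed

lemma ulin_mono: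
  assumes "rluz_groupoid A" "u \<in> ulin A G" "rle A y y'"
  shows "rle A (u y) (u y')"
  using assms(2)
proof (induction rule: ulin.induct)
  case ident then show ?case using assms(3) by simp
next
  case (lmul u g) then show ?case using mult_mono_r[OF assms(1)] by simp
next
  case (rmul u g) then show ?case using mult_mono_l[OF assms(1)] by simp
qed

lemma rep_G:
  assumes "g \<in> gen_subgroupoid A C"
  shows "\<exists>t. set_tr t \<subseteq> Some ` (C \<union> {rone A}) \<and> (\<forall>y. ev A y t = g)"
  using assms
proof (induction rule: gen_subgroupoid.induct)
  case (base c) then show ?case by (intro exI[of _ "Lf (Some c)"]) auto
next
  case unit then show ?case by (intro exI[of _ "Lf (Some (rone A))"]) auto
next
  case (mult x1 x2)
  then obtain s t where "set_tr s \<subseteq> Some ` (C \<union> {rone A})" "\<forall>y. ev A y s = x1"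
    "set_tr t \<subseteq> Some ` (C \<union> {rone A})" "\<forall>y. ev A y t = x2" by blast
  then show ?case by (intro exI[of _ "Nd s t"]) auto
qed

lemma rep_U:
  assumes "u \<in> ulin A (gen_subgroupoid A C)"
  shows "\<exists>v. set_tr v \<subseteq> insert None (Some ` (C \<union> {rone A})) \<and> (\<forall>y. u y = ev A y v)"
  using assms
proof (induction rule: ulin.induct)
  case ident then show ?case by (intro exI[of _ "Lf None"]) auto
next
  case (lmul u g)
  obtain v where v: "set_tr v \<subseteq> insert None (Some ` (C \<union> {rone A}))" "\<forall>y. u y = ev A y v"
    using lmul by blast
  obtain t where t: "set_tr t \<subseteq> Some ` (C \<union> {rone A})" "\<forall>y. ev A y t = g"
    using rep_G[OF lmul(2)] by blast
  show ?case using v t by (intro exI[of _ "Nd t v"]) auto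
next
  case (rmul u g)
  obtain v where v: "set_tr v \<subseteq> insert None (Some ` (C \<union> {rone A}))" "\<forall>y. u y = ev A y v"
    using rmul by blast
  obtain t where t: "set_tr t \<subseteq> Some ` (C \<union> {rone A})" "\<forall>y. ev A y t = g"
    using rep_G[OF rmul(2)] by blast
  show ?case using v t by (intro exI[of _ "Nd v t"]) auto
qed



lemma closed_finite:
  assumes "finite ((\<lambda>x. rhd F {x}) ` fG F)"
  shows "finite (cU (Fplus F))"
proof -
  let ?ty = "\<lambda>x. rhd F {x}"
  have rhd_eq: "rhd F X = fT F \<inter> \<Inter> (?ty ` X)" for X by (auto simp: rhd_def)
  have "cU (Fplus F) \<subseteq> (\<lambda>S. lhd F (fT F \<inter> \<Inter> S)) ` Pow (?ty ` fG F)"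
  proof
    fix X assume "X \<in> cU (Fplus F)"
    then have X: "X \<subseteq> fG F" "lhd F (rhd F X) = X" by (simp_all add: Fplus_def gammaN_def)
    then have "X = lhd F (fT F \<inter> \<Inter> (?ty ` X))" using rhd_eq[of X] by metis
    moreover have "?ty ` X \<in> Pow (?ty ` fG F)" using X(1) by auto
    ultimately show "X \<in> (\<lambda>S. lhd F (fT F \<inter> \<Inter> S)) ` Pow (?ty ` fG F)"
      by (rule image_eqI[where f = "\<lambda>S. lhd F (fT F \<inter> \<Inter> S)" and x = "?ty ` X"])
  qed
  moreover have "finite ((\<lambda>S. lhd F (fT F \<inter> \<Inter> S)) ` Pow (?ty ` fG F))"
    using assms by simp
  ultimately show ?thesis by (rule finite_subset)
qed

lemma types_finite:
  assumes "interior_rluz A" "integral A" "finite B"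
  shows "finite ((\<lambda>x. rhd (frameAB0 A B) {x}) ` fG (frameAB0 A B))"
proof (rule ccontr)
  define F where "F = frameAB0 A B"
  define C where "C = B \<union> {rzero A}"
  define G where "G = gen_subgroupoid A C"
  define ty where "ty x = rhd F {x}" for x
  have gr: "rluz_groupoid A" using assms(1) by (simp add: interior_rluz_def)
  have FG: "fG F = G" and FT: "fT F = ulin A G \<times> C"
    and FN: "fN F x p = rle A (fst p x) (snd p)" for x p
    by (auto simp: F_def G_def C_def frameAB0_def frameAC_def split: prod.splits)
  have ty_iff: "p \<in> ty x \<longleftrightarrow> p \<in> ulin A G \<times> C \<and> rle A (fst p x) (snd p)" for p x
    by (simp add: ty_def rhd_def FT FN)
  assume "\<not> finite ((\<lambda>x. rhd (frameAB0 A B) {x}) ` fG (frameAB0 A B))"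
  moreover have "fG (frameAB0 A B) = G" using FG by (simp only: F_def)
  moreover have "(\<lambda>x. rhd (frameAB0 A B) {x}) = ty" by (simp add: ty_def F_def fun_eq_iff)
  ultimately have inf: "infinite (ty ` G)" by metis
  obtain e :: "nat \<Rightarrow> _" where e: "inj e" "range e \<subseteq> ty ` G"
    using infinite_countable_subset[OF inf] by blast
  have "\<forall>k. \<exists>z. z \<in> G \<and> e k = ty z" using e(2) by blast
  then have "\<exists>x. \<forall>k. x k \<in> G \<and> e k = ty (x k)" by (rule choice)
  then obtain x where x: "\<forall>k. x k \<in> G \<and> e k = ty (x k)" by blast
  define L0 where "L0 = Some ` (C \<union> {rone A})"
  define L where "L = insert None L0"
  have finL: "finite L" using assms(3) by (simp add: L_def L0_def C_def)
  have "\<forall>k. \<exists>t. set_tr t \<subseteq> L0 \<and> (\<forall>y. ev A y t = x k)"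
  proof
    fix k
    have "x k \<in> gen_subgroupoid A C" using x by (simp add: G_def)
    from rep_G[OF this] show "\<exists>t. set_tr t \<subseteq> L0 \<and> (\<forall>y. ev A y t = x k)" by (simp add: L0_def)
  qed
  then have "\<exists>\<tau>. \<forall>k. set_tr (\<tau> k) \<subseteq> L0 \<and> (\<forall>y. ev A y (\<tau> k) = x k)" by (rule choice)
  then obtain \<tau> where \<tau>: "\<forall>k. set_tr (\<tau> k) \<subseteq> L0 \<and> (\<forall>y. ev A y (\<tau> k) = x k)" by blast
  have \<tau>L: "\<tau> k \<in> {t. set_tr t \<subseteq> L}" for k using \<tau> by (auto simp: L_def)
  from good_chain[OF kruskal[OF finL] \<tau>L] obtain h :: "nat \<Rightarrow> nat"
    where h0: "strict_mono h \<and> (\<forall>a b::nat. a < b \<longrightarrow> emb (\<tau> (h a)) (\<tau> (h b)))" ..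
  define X where "X k = x (h k)" for k
  have Xle: "rle A (X b) (X a)" if "a < b" for a b :: nat
  proof -
    have "emb (\<tau> (h a)) (\<tau> (h b))" using h0 that by blast
    then have "rle A (ev A (X a) (\<tau> (h b))) (ev A (X a) (\<tau> (h a)))"
      using emb_ev[OF gr assms(2)] by blast
    then show ?thesis using \<tau> by (simp add: X_def)
  qed
  have tysub: "ty (X a) \<subseteq> ty (X b)" if "a \<le> b" for a b :: nat
  proof (cases "a = b")
    case True then show ?thesis by simp
  next
    case False
    then have ab: "a < b" using that by simp
    show ?thesis
    proof
      fix p assume "p \<in> ty (X a)"
      then have p: "fst p \<in> ulin A G" "snd p \<in> C" "rle A (fst p (X a)) (snd p)"
        using ty_iff by auto
      have "rle A (fst p (X b)) (fst p (X a))" using ulin_mono[OF gr p(1) Xle[OF ab]] .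
      then have "rle A (fst p (X b)) (snd p)" using rle_trans[OF gr _ p(3)] by blast
      then show "p \<in> ty (X b)" using ty_iff p by (auto simp: mem_Times_iff)
    qed
  qed
  have tyne: "ty (X a) \<noteq> ty (X b)" if "a \<noteq> b" for a b :: nat
  proof -
    have "h a \<noteq> h b" using h0 that by (metis strict_mono_eq)
    then have "e (h a) \<noteq> e (h b)" using e(1) by (meson inj_eq)
    then show ?thesis using x by (simp add: X_def)
  qed
  have "\<forall>k. \<exists>p. p \<in> ty (X (Suc k)) \<and> p \<notin> ty (X k)"
  proof
    fix k :: nat
    have "ty (X k) \<subseteq> ty (X (Suc k))" using tysub by simp
    moreover have "ty (X k) \<noteq> ty (X (Suc k))" using tyne by simp
    ultimately show "\<exists>p. p \<in> ty (X (Suc k)) \<and> p \<notin> ty (X k)" by blast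
  qed
  then have "\<exists>p. \<forall>k. p k \<in> ty (X (Suc k)) \<and> p k \<notin> ty (X k)" by (rule choice)
  then obtain p where p: "\<forall>k. p k \<in> ty (X (Suc k)) \<and> p k \<notin> ty (X k)" by blast
  have pU: "fst (p k) \<in> ulin A G" and pC: "snd (p k) \<in> C" for k
    using p ty_iff by (auto simp: mem_Times_iff)
  have "finite ((snd \<circ> p) ` UNIV)"
  proof (rule finite_subset)
    show "(snd \<circ> p) ` UNIV \<subseteq> C" using pC by auto
    show "finite C" using assms(3) by (simp add: C_def)
  qed
  then obtain k0 where "infinite {k \<in> UNIV. (snd \<circ> p) k = (snd \<circ> p) k0}"
    using pigeonhole_infinite[of "UNIV :: nat set" "snd \<circ> p"] by auto
  then have infK: "infinite {k. snd (p k) = snd (p k0)}" by simp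
  define K where "K = {k. snd (p k) = snd (p k0)}"
  define q where "q = enumerate K"
  have "\<forall>k. \<exists>v. set_tr v \<subseteq> L \<and> (\<forall>y. fst (p k) y = ev A y v)"
  proof
    fix k
    have "fst (p k) \<in> ulin A (gen_subgroupoid A C)" using pU by (simp add: G_def)
    from rep_U[OF this] show "\<exists>v. set_tr v \<subseteq> L \<and> (\<forall>y. fst (p k) y = ev A y v)" by (simp add: L_def L0_def)
  qed
  then have "\<exists>vv. \<forall>k. set_tr (vv k) \<subseteq> L \<and> (\<forall>y. fst (p k) y = ev A y (vv k))" by (rule choice)
  then obtain vv where vv: "\<forall>k. set_tr (vv k) \<subseteq> L \<and> (\<forall>y. fst (p k) y = ev A y (vv k))" by blast
  have "\<forall>n. (vv \<circ> q) n \<in> {t. set_tr t \<subseteq> L}" using vv by simp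
  then have "\<exists>a b::nat. a < b \<and> emb ((vv \<circ> q) a) ((vv \<circ> q) b)"
    using kruskal[OF finL] unfolding good_def by blast
  then obtain a b :: nat where ab: "a < b" "emb (vv (q a)) (vv (q b))" by auto
  define k where "k = q a"
  define l where "l = q b"
  have kl: "k < l" using ab(1) infK by (simp add: k_def l_def q_def K_def enumerate_mono)
  have infK': "infinite K" using infK by (simp add: K_def)
  have "k \<in> K" "l \<in> K" using enumerate_in_set[OF infK'] by (simp_all add: k_def l_def q_def)
  then have sndeq: "snd (p k) = snd (p l)" by (simp add: K_def)
  have "p k \<in> ty (X l)" using p tysub[of "Suc k" l] kl by auto
  then have 1: "rle A (fst (p k) (X l)) (snd (p k))" using ty_iff by blast
  have "rle A (ev A (X l) (vv l)) (ev A (X l) (vv k))"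
    using emb_ev[OF gr assms(2)] ab(2) by (simp add: k_def l_def)
  then have 2: "rle A (fst (p l) (X l)) (fst (p k) (X l))" using vv by simp
  have "rle A (fst (p l) (X l)) (snd (p l))" using rle_trans[OF gr 2 1] sndeq by simp
  then have "p l \<in> ty (X l)" using ty_iff pU pC by (simp add: mem_Times_iff)
  then show False using p by blast
qed

lemma ulin_zero:
  assumes "rluz_groupoid A" "zero_bounded A" "u \<in> ulin A G"
  shows "rle A (u (rzero A)) (rzero A)"
  using assms(3)
proof (induction rule: ulin.induct)
  case ident then show ?case using rle_refl[OF assms(1)] by simp
next
  case (lmul u g)
  have "rle A (rmult A g (rzero A)) (rzero A)"
    using resid(1)[OF assms(1)] assms(2) by (simp add: zero_bounded_def)
  then show ?case using rle_trans[OF assms(1) mult_mono_r[OF assms(1) lmul.IH]] by simp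
next
  case (rmul u g)
  have "rle A (rmult A (rzero A) g) (rzero A)"
    using resid(2)[OF assms(1)] assms(2) by (simp add: zero_bounded_def)
  then show ?case using rle_trans[OF assms(1) mult_mono_l[OF assms(1) rmul.IH]] by simp
qed

lemma zero_part:
  assumes "interior_rluz A" "zero_bounded A" "X \<in> cU (Fplus (frameAB0 A B))"
  shows "cmeet (Fplus (frameAB0 A B)) (czero (Fplus (frameAB0 A B)) ) X = czero (Fplus (frameAB0 A B))"
proof -
  define F where "F = frameAB0 A B"
  define C where "C = B \<union> {rzero A}"
  define G where "G = gen_subgroupoid A C"
  have gr: "rluz_groupoid A" using assms(1) by (simp add: interior_rluz_def)
  have FG: "fG F = G" and FT: "fT F = ulin A G \<times> C"
    and FN: "fN F x p = rle A (fst p x) (snd p)" and FE: "feps F = (id, rzero A)" for x p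
    by (auto simp: F_def G_def C_def frameAB0_def frameAC_def split: prod.splits)
  have X: "lhd F (rhd F X) = X" using assms(3) by (auto simp: F_def Fplus_def gammaN_def)
  have "lhd F {feps F} \<subseteq> X"
  proof
    fix g assume "g \<in> lhd F {feps F}"
    then have g: "g \<in> G" "rle A g (rzero A)" by (auto simp: lhd_def FG FN FE)
    have "g \<in> lhd F (rhd F X)"
      unfolding lhd_def
    proof (intro CollectI conjI ballI)
      show "g \<in> fG F" using g FG by simp
      fix pp assume "pp \<in> rhd F X"
      then have pp: "fst pp \<in> ulin A G" "snd pp \<in> C" by (auto simp: rhd_def FT mem_Times_iff)
      have 1: "rle A (fst pp g) (fst pp (rzero A))" using ulin_mono[OF gr pp(1) g(2)] .
      have 2: "rle A (fst pp (rzero A)) (rzero A)" using ulin_zero[OF gr assms(2) pp(1)] .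
      have 3: "rle A (rzero A) (snd pp)" using assms(2) by (simp add: zero_bounded_def)
      show "fN F g pp" using rle_trans[OF gr rle_trans[OF gr 1 2] 3] by (simp add: FN)
    qed
    then show "g \<in> X" using X by simp
  qed
  then show ?thesis by (auto simp: Fplus_def F_def)
qed


theorem mainTheorem7:
  fixes A :: "'a rluz" and B :: "'a set"
  assumes "interior_rluz A" and "integral A" and "finite B"
  shows "finite (cU (Fplus (frameAB0 A B))) \<and>
         (zero_bounded A \<longrightarrow>
            (\<forall>X \<in> cU (Fplus (frameAB0 A B)).
               cmeet (Fplus (frameAB0 A B)) (czero (Fplus (frameAB0 A B))) X
                 = czero (Fplus (frameAB0 A B))))"
proof
  show "finite (cU (Fplus (frameAB0 A B)))"
    by (rule closed_finite[OF types_finite[OF assms]])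
  show "zero_bounded A \<longrightarrow>
            (\<forall>X \<in> cU (Fplus (frameAB0 A B)).
               cmeet (Fplus (frameAB0 A B)) (czero (Fplus (frameAB0 A B))) X
                 = czero (Fplus (frameAB0 A B)))"
    using zero_part[OF assms(1)] by blast
qed

end
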